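(* Let $L$ be a nonassociative code loop and let $x\in L$ with $x^2=-1$. If the elementary mapping $\tau_x$ is a half-automorphism of $L$, then $x\notin N(L)$.
   Context: A code loop is a finite Moufang loop (loop satisfying $(x\cdot zx)y=x(z\cdot xy)$) with a unique nontrivial square, denoted $-1$. $N(L)$ denotes the nucleus of $L$, the set of elements $a$ with $(a,y,z)=(y,a,z)=(y,z,a)=1$ for all $y,z$, where the associator is defined by $(xy)z=(x(yz))(x,y,z)$. A half-automorphism is a bijection $f$ with $f(xy)\in\{f(x)f(y),f(y)f(x)\}$ for all $x,y$. For $c\in L$, $\tau_c(y)=y^{-1}$ if $y\in\{c,c^{-1}\}$ and $\tau_c(y)=y$ otherwise. *)

theory Defs
  imports Main
begin

definition is_loop :: "('a \<Rightarrow> 'a \<Rightarrow> 'a) \<Rightarrow> 'a \<Rightarrow> bool" where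
  "is_loop mult e \<longleftrightarrow>
     (\<forall>x. mult e x = x \<and> mult x e = x) \<and>
     (\<forall>a b. \<exists>!x. mult a x = b) \<and>
     (\<forall>a b. \<exists>!y. mult y a = b)"

definition moufang :: "('a \<Rightarrow> 'a \<Rightarrow> 'a) \<Rightarrow> bool" where
  "moufang mult \<longleftrightarrow>
     (\<forall>x y z. mult (mult x (mult z x)) y = mult x (mult z (mult x y)))"

text \<open>Code loop: a finite Moufang loop with a unique nontrivial square m (the element -1).\<close>

definition code_loop :: "('a \<Rightarrow> 'a \<Rightarrow> 'a) \<Rightarrow> 'a \<Rightarrow> 'a \<Rightarrow> bool" where
  "code_loop mult e m \<longleftrightarrow>
     finite (UNIV :: 'a set) \<and> is_loop mult e \<and> moufang mult \<and>
     m \<noteq> e \<and> {s. \<exists>x. mult x x = s} = {e, m}"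

definition associative_loop :: "('a \<Rightarrow> 'a \<Rightarrow> 'a) \<Rightarrow> bool" where
  "associative_loop mult \<longleftrightarrow> (\<forall>x y z. mult (mult x y) z = mult x (mult y z))"

definition associator :: "('a \<Rightarrow> 'a \<Rightarrow> 'a) \<Rightarrow> 'a \<Rightarrow> 'a \<Rightarrow> 'a \<Rightarrow> 'a" where
  "associator mult x y z = (THE a. mult (mult x y) z = mult (mult x (mult y z)) a)"

definition nucleus :: "('a \<Rightarrow> 'a \<Rightarrow> 'a) \<Rightarrow> 'a \<Rightarrow> 'a set" where
  "nucleus mult e = {a. \<forall>y z. associator mult a y z = e \<and> associator mult y a z = e
                                \<and> associator mult y z a = e}"

text \<open>Inverse in a loop (for Moufang loops, two-sided).\<close>

definition loop_inv :: "('a \<Rightarrow> 'a \<Rightarrow> 'a) \<Rightarrow> 'a \<Rightarrow> 'a \<Rightarrow> 'a" where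
  "loop_inv mult e x = (THE y. mult x y = e)"

definition half_automorphism :: "('a \<Rightarrow> 'a \<Rightarrow> 'a) \<Rightarrow> ('a \<Rightarrow> 'a) \<Rightarrow> bool" where
  "half_automorphism mult f \<longleftrightarrow>
     bij f \<and> (\<forall>x y. f (mult x y) \<in> {mult (f x) (f y), mult (f y) (f x)})"

definition tau :: "('a \<Rightarrow> 'a \<Rightarrow> 'a) \<Rightarrow> 'a \<Rightarrow> 'a \<Rightarrow> 'a \<Rightarrow> 'a" where
  "tau mult e c y = (if y = c \<or> y = loop_inv mult e c then loop_inv mult e y else y)"

end

theory Submission
  imports Defs
begin

locale CL =
  fixes mult :: "'a \<Rightarrow> 'a \<Rightarrow> 'a" (infixl "\<cdot>" 70) and e m x :: 'a
  assumes cl: "code_loop mult e m" and xx: "x \<cdot> x = m"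
    and ha: "half_automorphism mult (tau mult e x)"
    and xN: "x \<in> nucleus mult e"
begin

lemma loop: "is_loop mult e" using cl by (simp add: code_loop_def)
lemma lid[simp]: "e \<cdot> a = a" using loop by (simp add: is_loop_def)
lemma rid[simp]: "a \<cdot> e = a" using loop by (simp add: is_loop_def)
lemma lcancel: assumes "a \<cdot> b = a \<cdot> c" shows "b = c"
proof -
  have "\<exists>!t. a \<cdot> t = a \<cdot> c" using loop unfolding is_loop_def by blast
  then show ?thesis using assms by blast
qed
lemma rcancel: assumes "b \<cdot> a = c \<cdot> a" shows "b = c"
proof -
  have "\<exists>!t. t \<cdot> a = c \<cdot> a" using loop unfolding is_loop_def by blast
  then show ?thesis using assms by blast
qed
lemma me: "m \<noteq> e" using cl by (simp add: code_loop_def)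
lemma sq: "a \<cdot> a = e \<or> a \<cdot> a = m"
proof -
  have h: "{s. \<exists>x. x \<cdot> x = s} = {e, m}" using cl by (simp add: code_loop_def)
  have "a \<cdot> a \<in> {e, m}" unfolding h[symmetric] by blast
  then show ?thesis by simp
qed
lemma leftalt: "(a \<cdot> a) \<cdot> b = a \<cdot> (a \<cdot> b)"
proof -
  have "\<forall>x y z. (x \<cdot> (z \<cdot> x)) \<cdot> y = x \<cdot> (z \<cdot> (x \<cdot> y))"
    using cl unfolding code_loop_def moufang_def by blast
  then have "(a \<cdot> (e \<cdot> a)) \<cdot> b = a \<cdot> (e \<cdot> (a \<cdot> b))" by blast
  then show ?thesis by simp
qed

lemma assoc_e: "associator mult a b c = e \<longleftrightarrow> (a \<cdot> b) \<cdot> c = a \<cdot> (b \<cdot> c)"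
proof -
  have ex: "\<exists>!t. (a \<cdot> (b \<cdot> c)) \<cdot> t = (a \<cdot> b) \<cdot> c" using loop unfolding is_loop_def by blast
  have th: "(a \<cdot> (b \<cdot> c)) \<cdot> associator mult a b c = (a \<cdot> b) \<cdot> c"
    unfolding associator_def by (rule theI' [OF ex[unfolded eq_commute[of _ "(a \<cdot> b) \<cdot> c"]], THEN sym])
  show ?thesis
  proof
    assume "associator mult a b c = e" then show "(a \<cdot> b) \<cdot> c = a \<cdot> (b \<cdot> c)" using th by simp
  next
    assume h: "(a \<cdot> b) \<cdot> c = a \<cdot> (b \<cdot> c)"
    have "(a \<cdot> (b \<cdot> c)) \<cdot> associator mult a b c = (a \<cdot> (b \<cdot> c)) \<cdot> e" using th h by simp
    then show "associator mult a b c = e" by (rule lcancel)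
  qed
qed

definition nuc :: "'a \<Rightarrow> bool" where
  "nuc a \<longleftrightarrow> (\<forall>y z. (a \<cdot> y) \<cdot> z = a \<cdot> (y \<cdot> z) \<and> (y \<cdot> a) \<cdot> z = y \<cdot> (a \<cdot> z)
     \<and> (y \<cdot> z) \<cdot> a = y \<cdot> (z \<cdot> a))"

lemma nuc_iff: "a \<in> nucleus mult e \<longleftrightarrow> nuc a"
  unfolding nucleus_def nuc_def by (simp add: assoc_e)

lemma nuc1: "nuc a \<Longrightarrow> (a \<cdot> y) \<cdot> z = a \<cdot> (y \<cdot> z)" by (simp add: nuc_def)
lemma nuc2: "nuc a \<Longrightarrow> (y \<cdot> a) \<cdot> z = y \<cdot> (a \<cdot> z)" by (simp add: nuc_def)
lemma nuc3: "nuc a \<Longrightarrow> (y \<cdot> z) \<cdot> a = y \<cdot> (z \<cdot> a)" by (simp add: nuc_def)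

lemma nuc_e: "nuc e" by (simp add: nuc_def)

lemma nuc_mult: assumes a: "nuc a" and b: "nuc b" shows "nuc (a \<cdot> b)"
  unfolding nuc_def
proof (intro allI conjI)
  fix y z
  show "(a \<cdot> b) \<cdot> y \<cdot> z = a \<cdot> b \<cdot> (y \<cdot> z)"
    by (simp add: a b nuc1 nuc2)
  have "y \<cdot> (a \<cdot> b) \<cdot> z = ((y \<cdot> a) \<cdot> b) \<cdot> z" by (simp add: a nuc2)
  also have "\<dots> = (y \<cdot> a) \<cdot> (b \<cdot> z)" by (simp add: b nuc2)
  also have "\<dots> = y \<cdot> (a \<cdot> (b \<cdot> z))" by (simp add: a nuc2)
  also have "\<dots> = y \<cdot> (a \<cdot> b \<cdot> z)" by (simp add: a nuc1)
  finally show "y \<cdot> (a \<cdot> b) \<cdot> z = y \<cdot> (a \<cdot> b \<cdot> z)" .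
  have "y \<cdot> z \<cdot> (a \<cdot> b) = ((y \<cdot> z) \<cdot> a) \<cdot> b" by (simp add: b nuc3)
  also have "\<dots> = (y \<cdot> (z \<cdot> a)) \<cdot> b" by (simp add: a nuc3)
  also have "\<dots> = y \<cdot> ((z \<cdot> a) \<cdot> b)" by (simp add: b nuc3)
  also have "\<dots> = y \<cdot> (z \<cdot> (a \<cdot> b))" by (simp add: b nuc3)
  finally show "y \<cdot> z \<cdot> (a \<cdot> b) = y \<cdot> (z \<cdot> (a \<cdot> b))" .
qed

definition n where "n = x \<cdot> m"

lemma xn: "nuc x" using xN nuc_iff by simp
lemma mn: "nuc m" using nuc_mult[OF xn xn] xx by simp
lemma nn: "nuc n" unfolding n_def using nuc_mult[OF xn mn] .
lemma mm: "m \<cdot> m = e"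
proof (rule ccontr)
  assume "m \<cdot> m \<noteq> e"
  then have "m \<cdot> m = m \<cdot> e" using sq[of m] by simp
  then show False using lcancel me by metis
qed
lemma mx: "m \<cdot> x = n"
proof -
  have "m \<cdot> x = x \<cdot> (x \<cdot> x)" using nuc1[OF xn] xx by metis
  then show ?thesis using xx n_def by simp
qed
lemma x_n: "x \<cdot> n = e"
proof -
  have "x \<cdot> n = (x \<cdot> x) \<cdot> m" unfolding n_def using nuc1[OF xn] by simp
  then show ?thesis using xx mm by simp
qed
lemma n_x: "n \<cdot> x = e"
proof -
  have "n \<cdot> x = x \<cdot> (m \<cdot> x)" unfolding n_def using nuc1[OF xn] by simp
  then show ?thesis using mx x_n by simp
qed
lemma nm: "n \<cdot> m = x"
proof -
  have "n \<cdot> m = x \<cdot> (m \<cdot> m)" unfolding n_def using nuc1[OF xn] by simp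
  then show ?thesis using mm by simp
qed
lemma mnn: "m \<cdot> n = x"
proof -
  have "m \<cdot> n = (m \<cdot> x) \<cdot> m" unfolding n_def using nuc1[OF mn] by simp
  then show ?thesis using mx nm by simp
qed
lemma n_n: "n \<cdot> n = m"
proof -
  have "n \<cdot> n = x \<cdot> (m \<cdot> n)" unfolding n_def using nuc1[OF xn] by (simp add: n_def)
  then show ?thesis using mnn xx by simp
qed
lemma xnen: "x \<noteq> n"
proof
  assume "x = n"
  then have "x \<cdot> e = x \<cdot> m" using n_def by simp
  then show False using lcancel me by metis
qed
lemma xe: "x \<noteq> e" using xx me by auto
lemma ne: "n \<noteq> e" using x_n xe rid by metis
lemma xm: "x \<noteq> m" using n_def mm ne by auto
lemma nmm: "n \<noteq> m" using nm mm xe by auto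

lemma inv_x: "loop_inv mult e x = n"
  unfolding loop_inv_def using x_n lcancel by blast
lemma inv_n: "loop_inv mult e n = x"
  unfolding loop_inv_def using n_x lcancel by blast

lemma tau_x: "tau mult e x x = n" by (simp add: tau_def inv_x)
lemma tau_n: "tau mult e x n = x" by (simp add: tau_def inv_x inv_n)
lemma tau_o: "a \<noteq> x \<Longrightarrow> a \<noteq> n \<Longrightarrow> tau mult e x a = a" by (simp add: tau_def inv_x)

definition S where "S = {e, m, x, n}"

lemma S_nuc: "s \<in> S \<Longrightarrow> nuc s" using nuc_e mn xn nn by (auto simp: S_def)

lemma x_out: assumes "y \<notin> S" shows "x \<cdot> y \<notin> S"
proof
  assume "x \<cdot> y \<in> S"
  then have "x \<cdot> y = x \<cdot> n \<or> x \<cdot> y = x \<cdot> x \<or> x \<cdot> y = x \<cdot> e \<or> x \<cdot> y = x \<cdot> m"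
    using x_n xx n_def by (auto simp: S_def)
  then show False using assms lcancel by (auto simp: S_def)
qed

lemma n_out: assumes "y \<notin> S" shows "n \<cdot> y \<notin> S"
proof
  assume "n \<cdot> y \<in> S"
  then have "n \<cdot> y = n \<cdot> x \<or> n \<cdot> y = n \<cdot> n \<or> n \<cdot> y = n \<cdot> e \<or> n \<cdot> y = n \<cdot> m"
    using n_x n_n nm by (auto simp: S_def)
  then show False using assms lcancel by (auto simp: S_def)
qed

lemma xcomm: assumes "y \<notin> S" shows "x \<cdot> y = y \<cdot> n"
proof -
  have h: "tau mult e x (x \<cdot> y) \<in> {tau mult e x x \<cdot> tau mult e x y, tau mult e x y \<cdot> tau mult e x x}"
    using ha by (simp add: half_automorphism_def)
  have "y \<noteq> x" "y \<noteq> n" "x \<cdot> y \<noteq> x" "x \<cdot> y \<noteq> n" using assms x_out[OF assms] by (auto simp: S_def)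
  then have "x \<cdot> y = n \<cdot> y \<or> x \<cdot> y = y \<cdot> n" using h tau_x tau_o by simp
  then show ?thesis using rcancel xnen by blast
qed

lemma ncomm: assumes "y \<notin> S" shows "n \<cdot> y = y \<cdot> x"
proof -
  have h: "tau mult e x (n \<cdot> y) \<in> {tau mult e x n \<cdot> tau mult e x y, tau mult e x y \<cdot> tau mult e x n}"
    using ha by (simp add: half_automorphism_def)
  have "y \<noteq> x" "y \<noteq> n" "n \<cdot> y \<noteq> x" "n \<cdot> y \<noteq> n" using assms n_out[OF assms] by (auto simp: S_def)
  then have "n \<cdot> y = x \<cdot> y \<or> n \<cdot> y = y \<cdot> x" using h tau_n tau_o by simp
  then show ?thesis using rcancel xnen by metis
qed

lemma bad: assumes "y \<notin> S" "z \<notin> S" shows "y \<cdot> z \<in> S"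
proof (rule ccontr)
  assume a: "y \<cdot> z \<notin> S"
  have "(y \<cdot> z) \<cdot> x = y \<cdot> (z \<cdot> x)" using nuc3[OF xn] .
  also have "\<dots> = y \<cdot> (n \<cdot> z)" using ncomm[OF assms(2)] by simp
  also have "\<dots> = (y \<cdot> n) \<cdot> z" using nuc2[OF nn] by simp
  also have "\<dots> = (x \<cdot> y) \<cdot> z" using xcomm[OF assms(1)] by simp
  also have "\<dots> = x \<cdot> (y \<cdot> z)" using nuc1[OF xn] by simp
  also have "\<dots> = (y \<cdot> z) \<cdot> n" using xcomm[OF a] .
  finally show False using lcancel xnen by blast
qed


lemma xm_n: "x \<cdot> m = n" by (simp add: n_def)

lemma S_mult: "s \<in> S \<Longrightarrow> t \<in> S \<Longrightarrow> s \<cdot> t \<in> S"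
  by (auto simp: S_def xm_n xx x_n mx mm mnn n_x nm n_n)

lemma m_comm_S: "t \<in> S \<Longrightarrow> m \<cdot> t = t \<cdot> m"
  by (auto simp: S_def xm_n mx mm mnn nm)

lemma m_y: assumes "y \<notin> S" shows "m \<cdot> y = y \<cdot> m"
proof -
  have "m \<cdot> y = x \<cdot> (x \<cdot> y)" using leftalt xx by metis
  also have "\<dots> = x \<cdot> (y \<cdot> n)" using xcomm[OF assms] by simp
  also have "\<dots> = (x \<cdot> y) \<cdot> n" using nuc3[OF nn] by simp
  also have "\<dots> = (y \<cdot> n) \<cdot> n" using xcomm[OF assms] by simp
  also have "\<dots> = y \<cdot> m" using nuc3[OF nn] n_n by simp
  finally show ?thesis .
qed

definition bar where "bar s = (if s = x then n else if s = n then x else s)"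

lemma bar_S: "s \<in> S \<Longrightarrow> bar s \<in> S" by (auto simp: S_def bar_def)

lemma comm_l: assumes "y \<notin> S" "s \<in> S" shows "s \<cdot> y = y \<cdot> bar s"
  using assms xcomm[OF assms(1)] ncomm[OF assms(1)] m_y[OF assms(1)] xnen
  by (auto simp: S_def bar_def)

lemma comm_r: assumes "y \<notin> S" "s \<in> S" shows "y \<cdot> s = bar s \<cdot> y"
  using assms xcomm[OF assms(1)] ncomm[OF assms(1)] m_y[OF assms(1)] xnen
  by (auto simp: S_def bar_def)

lemma assoc_all: "associative_loop mult"
proof (cases "\<forall>a. a \<in> S")
  case True
  then show ?thesis unfolding associative_loop_def using S_nuc nuc1 by blast
next
  case False
  then obtain y where y: "y \<notin> S" by blast
  define u where "u = y \<cdot> y"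
  have uem: "u = e \<or> u = m" using sq u_def by simp
  have uS: "u \<in> S" using uem by (auto simp: S_def)
  have un: "nuc u" using S_nuc uS by simp
  have uu: "u \<cdot> u = e" using uem by (elim disjE) (simp_all add: mm)
  have uy: "u \<cdot> y = y \<cdot> u" using uem m_y[OF y] by auto
  have ut: "t \<in> S \<Longrightarrow> u \<cdot> t = t \<cdot> u" for t using uem m_comm_S by auto
  have la: "y \<cdot> (y \<cdot> b) = u \<cdot> b" for b using leftalt u_def by simp
  have rep: "a \<in> S \<or> (\<exists>t\<in>S. a = y \<cdot> t)" for a
  proof (cases "a \<in> S")
    case False
    define s where "s = y \<cdot> a"
    have sS: "s \<in> S" using bad[OF y False] s_def by simp
    have "a = u \<cdot> (u \<cdot> a)" using nuc1[OF un] uu by (metis lid)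
    also have "\<dots> = u \<cdot> (y \<cdot> s)" using la s_def by simp
    also have "\<dots> = (y \<cdot> u) \<cdot> s" using nuc1[OF un] uy by metis
    also have "\<dots> = y \<cdot> (u \<cdot> s)" using nuc2[OF un] by simp
    finally show ?thesis using S_mult[OF uS sS] by blast
  qed simp
  have L1: "(y \<cdot> a) \<cdot> b = y \<cdot> (a \<cdot> b)" for a b
  proof -
    { fix t assume tS: "t \<in> S" and a: "a = y \<cdot> t"
      have "(y \<cdot> a) \<cdot> b = (u \<cdot> t) \<cdot> b" using a la by simp
      also have "\<dots> = u \<cdot> (t \<cdot> b)" using nuc1[OF un] by simp
      also have "\<dots> = y \<cdot> (y \<cdot> (t \<cdot> b))" using la by simp
      also have "\<dots> = y \<cdot> (a \<cdot> b)" using a nuc2[OF S_nuc[OF tS]] by simp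
      finally have ?thesis . }
    then show ?thesis using rep[of a] nuc2[OF S_nuc] by blast
  qed
  have L2: "(a \<cdot> y) \<cdot> y = a \<cdot> (y \<cdot> y)" for a
  proof -
    { fix t assume tS: "t \<in> S" and a: "a = y \<cdot> t"
      have bS: "bar t \<in> S" using bar_S tS .
      have bb: "bar (bar t) = t" using tS xnen by (auto simp: S_def bar_def)
      have "(a \<cdot> y) \<cdot> y = (y \<cdot> (t \<cdot> y)) \<cdot> y" using a nuc2[OF S_nuc[OF tS]] by simp
      also have "\<dots> = (u \<cdot> bar t) \<cdot> y" using comm_l[OF y tS] la by simp
      also have "\<dots> = u \<cdot> (bar t \<cdot> y)" using nuc1[OF un] by simp
      also have "\<dots> = u \<cdot> (y \<cdot> t)" using comm_l[OF y bS] bb by simp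
      also have "\<dots> = y \<cdot> (u \<cdot> t)" using nuc1[OF un] nuc2[OF un] uy by metis
      also have "\<dots> = y \<cdot> (t \<cdot> u)" using ut[OF tS] by simp
      also have "\<dots> = a \<cdot> (y \<cdot> y)" using a nuc2[OF S_nuc[OF tS]] u_def by simp
      finally have ?thesis . }
    then show ?thesis using rep[of a] nuc1[OF S_nuc] by blast
  qed
  have L3: "(a \<cdot> b) \<cdot> y = a \<cdot> (b \<cdot> y)" for a b
  proof -
    { fix s assume sS: "s \<in> S" and b: "b = y \<cdot> s"
      have bS: "bar s \<in> S" using bar_S sS .
      have h: "(a \<cdot> y) \<cdot> s = a \<cdot> (y \<cdot> s)" by (rule nuc3[OF S_nuc[OF sS]])
      have "(a \<cdot> b) \<cdot> y = ((a \<cdot> y) \<cdot> s) \<cdot> y" using b h by simp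
      also have "\<dots> = (a \<cdot> y) \<cdot> (s \<cdot> y)" by (rule nuc2[OF S_nuc[OF sS]])
      also have "\<dots> = (a \<cdot> y) \<cdot> (y \<cdot> bar s)" using comm_l[OF y sS] by simp
      also have "\<dots> = ((a \<cdot> y) \<cdot> y) \<cdot> bar s" using nuc3[OF S_nuc[OF bS]] by simp
      also have "\<dots> = (a \<cdot> u) \<cdot> bar s" using L2 u_def by simp
      also have "\<dots> = a \<cdot> (u \<cdot> bar s)" using nuc2[OF un] by simp
      also have "\<dots> = a \<cdot> (y \<cdot> (y \<cdot> bar s))" using la by simp
      also have "\<dots> = a \<cdot> (y \<cdot> (s \<cdot> y))" using comm_l[OF y sS] by simp
      also have "\<dots> = a \<cdot> (b \<cdot> y)" using b nuc2[OF S_nuc[OF sS]] by simp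
      finally have ?thesis . }
    then show ?thesis using rep[of b] nuc2[OF S_nuc] by blast
  qed
  have L4: "(a \<cdot> y) \<cdot> b = a \<cdot> (y \<cdot> b)" for a b
  proof -
    { fix t assume tS: "t \<in> S" and a: "a = y \<cdot> t"
      have "(a \<cdot> y) \<cdot> b = (y \<cdot> (t \<cdot> y)) \<cdot> b" using a nuc2[OF S_nuc[OF tS]] by simp
      also have "\<dots> = (u \<cdot> bar t) \<cdot> b" using comm_l[OF y tS] la by simp
      also have "\<dots> = u \<cdot> (bar t \<cdot> b)" using nuc1[OF un] by simp
      also have "\<dots> = y \<cdot> (y \<cdot> (bar t \<cdot> b))" using la by simp
      also have "\<dots> = y \<cdot> ((y \<cdot> bar t) \<cdot> b)" using L1 by simp
      also have "\<dots> = y \<cdot> ((t \<cdot> y) \<cdot> b)" using comm_l[OF y tS] by simp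
      also have "\<dots> = y \<cdot> (t \<cdot> (y \<cdot> b))" using nuc1[OF S_nuc[OF tS]] by simp
      also have "\<dots> = a \<cdot> (y \<cdot> b)" using a L1 by simp
      finally have ?thesis . }
    then show ?thesis using rep[of a] nuc1[OF S_nuc] by blast
  qed
  have yn: "nuc y" unfolding nuc_def using L1 L3 L4 by simp
  have alln: "nuc a" for a using rep[of a] S_nuc nuc_mult[OF yn] by blast
  show ?thesis unfolding associative_loop_def using alln nuc1 by blast
qed

end

theorem corollary5p3:
  fixes mult :: "'a \<Rightarrow> 'a \<Rightarrow> 'a" and e m x :: 'a
  assumes "code_loop mult e m"
    and "\<not> associative_loop mult"
    and "mult x x = m"
    and "half_automorphism mult (tau mult e x)"
  shows "x \<notin> nucleus mult e"
proof
  assume "x \<in> nucleus mult e"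
  then interpret CL mult e m x using assms by unfold_locales
  show False using assoc_all assms(2) by simp
qed

end
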